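(* In a combinatorial auction as described in the context, a Walrasian equilibrium $(x^*,p)$ is a price-match equilibrium if and only if $$p\bm Ax^*=w(\mathcal I\setminus i,c,\mathcal K(p))\qquad\text{for all } i\in\mathcal I.$$
   Context: Combinatorial auction: item types $j\in\mathcal J$ with supply $c_j\in\mathbb Z_{\ge1}$ (vector $c$); bidders $\mathcal I$; finite set of bids $\mathcal K$, bid $k$ made by bidder $i(k)$ with bundle $a^k\in\mathbb Z^J_{\ge0}$, $a^k\le c$, amount $b_k\ge0$; $\mathcal K_i$ = bids of bidder $i$; bids taken truthful. $\bm A$ = matrix with columns $a^k$, $\bm B$ with $\bm B_{i,k}=1$ iff $k\in\mathcal K_i$. Feasible allocation: $x\in\{0,1\}^K$, $\bm Ax\le c$, $\bm Bx\le\bm 1$. For a set of bidders $\mathcal C$, supply $c'$ and a bid collection with given amounts, $w(\mathcal C,c',\cdot)$ = maximum total bid amount over feasible allocations with supply $c'$ using only bids of bidders in $\mathcal C$. $x^*$ efficient allocation; $a^{i*},b_{i*}$ bundle and amount of $i$'s accepted bid ($\bm 0,0$ if none). $\mathcal K(p)$ denotes the same bids with amounts replaced by $b^p_k=p\,a^k$ if $p\,a^k\le b_k$ and $b^p_k=0$ otherwise. A Walrasian equilibrium (WE) is $(x^*,p)$, $p\ge0$, with $s_i=b_{i*}-p\,a^{i*}\ge0$, $p\,a^k+s_{i(k)}\ge b_k$ for all bids $k$, and $p_j=0$ for items in excess supply under $x^*$. A WE is a price-match equilibrium (PME) if for every bidder $i$ there is a feasible allocation $x^{-i}$ with $x^{-i}_k=0$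 for $k\in\mathcal K_i$, $p\,a^k\le b_k$ whenever $x^{-i}_k=1$, and $p\bm Ax^{-i}=p\bm Ax^*$. (Items may include artificial items, i.e. valid cuts added as rows of $\bm A$.) *)

theory Defs
  imports Complex_Main
begin

text \<open>Combinatorial auction data: item set J, bidder set I, bid set K,
  bundle a k j (quantity of item j in bid k), amount bb k, bidder owner k.
  An allocation x in {0,1}^K is represented by the set S of accepted bids.\<close>

definition price_of :: "'j set \<Rightarrow> ('j \<Rightarrow> real) \<Rightarrow> ('j \<Rightarrow> nat) \<Rightarrow> real" where
  "price_of J p v = (\<Sum>j\<in>J. p j * real (v j))"

definition feasible ::
  "'j set \<Rightarrow> 'i set \<Rightarrow> 'k set \<Rightarrow> ('k \<Rightarrow> 'j \<Rightarrow> nat) \<Rightarrow> ('k \<Rightarrow> 'i)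
   \<Rightarrow> ('j \<Rightarrow> nat) \<Rightarrow> 'k set \<Rightarrow> bool" where
  "feasible J I K a owner c' S \<longleftrightarrow>
     S \<subseteq> K \<and> (\<forall>j\<in>J. (\<Sum>k\<in>S. a k j) \<le> c' j)
     \<and> (\<forall>i\<in>I. card {k\<in>S. owner k = i} \<le> 1)"

definition w ::
  "'j set \<Rightarrow> 'i set \<Rightarrow> 'k set \<Rightarrow> ('k \<Rightarrow> 'j \<Rightarrow> nat) \<Rightarrow> ('k \<Rightarrow> 'i)
   \<Rightarrow> 'i set \<Rightarrow> ('j \<Rightarrow> nat) \<Rightarrow> ('k \<Rightarrow> real) \<Rightarrow> real" where
  "w J I K a owner C c' bb =
     Max ((\<lambda>S. \<Sum>k\<in>S. bb k) ` {S. feasible J I K a owner c' S \<and> (\<forall>k\<in>S. owner k \<in> C)})"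

text \<open>Amounts of the bid collection K(p).\<close>
definition bids_at_prices ::
  "'j set \<Rightarrow> ('k \<Rightarrow> 'j \<Rightarrow> nat) \<Rightarrow> ('k \<Rightarrow> real) \<Rightarrow> ('j \<Rightarrow> real) \<Rightarrow> 'k \<Rightarrow> real" where
  "bids_at_prices J a bb p k = (if price_of J p (a k) \<le> bb k then price_of J p (a k) else 0)"

definition efficient ::
  "'j set \<Rightarrow> 'i set \<Rightarrow> 'k set \<Rightarrow> ('k \<Rightarrow> 'j \<Rightarrow> nat) \<Rightarrow> ('k \<Rightarrow> real) \<Rightarrow> ('k \<Rightarrow> 'i)
   \<Rightarrow> ('j \<Rightarrow> nat) \<Rightarrow> 'k set \<Rightarrow> bool" where
  "efficient J I K a bb owner c S \<longleftrightarrow> feasible J I K a owner c S \<and>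
     (\<forall>T. feasible J I K a owner c T \<longrightarrow> (\<Sum>k\<in>T. bb k) \<le> (\<Sum>k\<in>S. bb k))"

text \<open>Bundle a^{i*} and amount b_{i*} of bidder i's accepted bid under S
  (sums over the at most one accepted bid of i; zero if none).\<close>
definition acc_bundle :: "('k \<Rightarrow> 'j \<Rightarrow> nat) \<Rightarrow> ('k \<Rightarrow> 'i) \<Rightarrow> 'k set \<Rightarrow> 'i \<Rightarrow> 'j \<Rightarrow> nat" where
  "acc_bundle a owner S i j = (\<Sum>k\<in>{k\<in>S. owner k = i}. a k j)"

definition acc_amount :: "('k \<Rightarrow> real) \<Rightarrow> ('k \<Rightarrow> 'i) \<Rightarrow> 'k set \<Rightarrow> 'i \<Rightarrow> real" where
  "acc_amount bb owner S i = (\<Sum>k\<in>{k\<in>S. owner k = i}. bb k)"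

definition alloc_value :: "'j set \<Rightarrow> ('k \<Rightarrow> 'j \<Rightarrow> nat) \<Rightarrow> ('j \<Rightarrow> real) \<Rightarrow> 'k set \<Rightarrow> real" where
  "alloc_value J a p S = (\<Sum>j\<in>J. p j * real (\<Sum>k\<in>S. a k j))"

definition walrasian ::
  "'j set \<Rightarrow> 'i set \<Rightarrow> 'k set \<Rightarrow> ('k \<Rightarrow> 'j \<Rightarrow> nat) \<Rightarrow> ('k \<Rightarrow> real) \<Rightarrow> ('k \<Rightarrow> 'i)
   \<Rightarrow> ('j \<Rightarrow> nat) \<Rightarrow> 'k set \<Rightarrow> ('j \<Rightarrow> real) \<Rightarrow> bool" where
  "walrasian J I K a bb owner c S p \<longleftrightarrow>
     (\<forall>j\<in>J. p j \<ge> 0)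
     \<and> (\<forall>i\<in>I. acc_amount bb owner S i - price_of J p (acc_bundle a owner S i) \<ge> 0)
     \<and> (\<forall>k\<in>K. price_of J p (a k)
              + (acc_amount bb owner S (owner k) - price_of J p (acc_bundle a owner S (owner k)))
              \<ge> bb k)
     \<and> (\<forall>j\<in>J. (\<Sum>k\<in>S. a k j) < c j \<longrightarrow> p j = 0)"

definition price_match ::
  "'j set \<Rightarrow> 'i set \<Rightarrow> 'k set \<Rightarrow> ('k \<Rightarrow> 'j \<Rightarrow> nat) \<Rightarrow> ('k \<Rightarrow> real) \<Rightarrow> ('k \<Rightarrow> 'i)
   \<Rightarrow> ('j \<Rightarrow> nat) \<Rightarrow> 'k set \<Rightarrow> ('j \<Rightarrow> real) \<Rightarrow> bool" where
  "price_match J I K a bb owner c S p \<longleftrightarrow>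
     walrasian J I K a bb owner c S p \<and>
     (\<forall>i\<in>I. \<exists>T. feasible J I K a owner c T \<and> (\<forall>k\<in>T. owner k \<noteq> i)
        \<and> (\<forall>k\<in>T. price_of J p (a k) \<le> bb k)
        \<and> alloc_value J a p T = alloc_value J a p S)"

end

theory Submission
  imports Defs
begin

lemma sum_price_of:
  assumes "finite J" "finite T"
  shows "(\<Sum>k\<in>T. price_of J p (a k)) = alloc_value J a p T"
proof -
  have "alloc_value J a p T = (\<Sum>j\<in>J. \<Sum>k\<in>T. p j * real (a k j))"
    unfolding alloc_value_def by (simp add: of_nat_sum sum_distrib_left)
  also have "\<dots> = (\<Sum>k\<in>T. \<Sum>j\<in>J. p j * real (a k j))"
    by (rule sum.swap)
  finally show ?thesis unfolding price_of_def by simp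
qed

lemma alloc_le:
  assumes "feasible J I K a owner c T" "\<forall>j\<in>J. p j \<ge> 0"
  shows "alloc_value J a p T \<le> (\<Sum>j\<in>J. p j * real (c j))"
  unfolding alloc_value_def
proof (rule sum_mono)
  fix j assume j: "j \<in> J"
  have "(\<Sum>k\<in>T. a k j) \<le> c j" using assms(1) j unfolding feasible_def by blast
  then show "p j * real (\<Sum>k\<in>T. a k j) \<le> p j * real (c j)"
    using assms(2) j by (intro mult_left_mono) (simp_all only: of_nat_le_iff)
qed

lemma alloc_eq:
  assumes "feasible J I K a owner c S" "walrasian J I K a bb owner c S p"
  shows "alloc_value J a p S = (\<Sum>j\<in>J. p j * real (c j))"
  unfolding alloc_value_def
proof (rule sum.cong)
  fix j assume j: "j \<in> J"
  have le: "(\<Sum>k\<in>S. a k j) \<le> c j" using assms(1) j unfolding feasible_def by blast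
  show "p j * real (\<Sum>k\<in>S. a k j) = p j * real (c j)"
  proof (cases "(\<Sum>k\<in>S. a k j) < c j")
    case True
    then have "p j = 0" using assms(2) j unfolding walrasian_def by blast
    then show ?thesis by simp
  next
    case False
    then show ?thesis using le by simp
  qed
qed simp

theorem proposition4:
  fixes J :: "'j set" and I :: "'i set" and K :: "'k set"
    and a :: "'k \<Rightarrow> 'j \<Rightarrow> nat" and bb :: "'k \<Rightarrow> real" and owner :: "'k \<Rightarrow> 'i"
    and c :: "'j \<Rightarrow> nat" and S :: "'k set" and p :: "'j \<Rightarrow> real"
  assumes "finite J" and "finite I" and "finite K"
    and "\<forall>j\<in>J. c j \<ge> 1"
    and "\<forall>k\<in>K. owner k \<in> I"
    and "\<forall>k\<in>K. \<forall>j\<in>J. a k j \<le> c j"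
    and "\<forall>k\<in>K. bb k \<ge> 0"
    and "efficient J I K a bb owner c S"
    and "walrasian J I K a bb owner c S p"
  shows "price_match J I K a bb owner c S p \<longleftrightarrow>
    (\<forall>i\<in>I. alloc_value J a p S = w J I K a owner (I - {i}) c (bids_at_prices J a bb p))"
proof -
  have fJ: "finite J" and fK: "finite K" using assms by auto
  have Sf: "feasible J I K a owner c S" using assms(8) unfolding efficient_def by blast
  have pnn: "\<forall>j\<in>J. p j \<ge> 0" using assms(9) unfolding walrasian_def by blast
  have AS: "alloc_value J a p S = (\<Sum>j\<in>J. p j * real (c j))"
    using alloc_eq[OF Sf assms(9)] .
  have pos: "price_of J p v \<ge> 0" for v
    unfolding price_of_def using pnn by (intro sum_nonneg) auto
  have bp_le: "bids_at_prices J a bb p k \<le> price_of J p (a k)" for k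
    unfolding bids_at_prices_def using pos[of "a k"] by auto
  define bp where "bp = bids_at_prices J a bb p"
  define F where "F i = {T. feasible J I K a owner c T \<and> (\<forall>k\<in>T. owner k \<in> I - {i})}" for i
  have Ffin: "finite ((\<lambda>T. \<Sum>k\<in>T. bp k) ` F i)" for i
  proof -
    have "F i \<subseteq> Pow K" unfolding F_def feasible_def by auto
    then show ?thesis using fK by (meson finite_Pow_iff finite_imageI finite_subset)
  qed
  have Fne: "{} \<in> F i" for i unfolding F_def feasible_def by simp
  have wdef: "w J I K a owner (I - {i}) c bp = Max ((\<lambda>T. \<Sum>k\<in>T. bp k) ` F i)" for i
    unfolding w_def F_def by simp
  have Fsub: "T \<subseteq> K" "finite T" if "T \<in> F i" for T i
    using that fK unfolding F_def feasible_def by (auto intro: finite_subset)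
  have upper: "(\<Sum>k\<in>T. bp k) \<le> alloc_value J a p S" if "T \<in> F i" for T i
  proof -
    have "(\<Sum>k\<in>T. bp k) \<le> (\<Sum>k\<in>T. price_of J p (a k))"
      unfolding bp_def by (intro sum_mono bp_le)
    also have "\<dots> = alloc_value J a p T" using sum_price_of[OF fJ Fsub(2)[OF that]] .
    also have "\<dots> \<le> alloc_value J a p S" unfolding AS
      using that unfolding F_def by (intro alloc_le[OF _ pnn]) auto
    finally show ?thesis .
  qed
  have wle: "w J I K a owner (I - {i}) c bp \<le> alloc_value J a p S" for i
    unfolding wdef using Ffin[of i] Fne[of i] upper by (subst Max_le_iff) blast+
  show ?thesis
  proof
    assume pm: "price_match J I K a bb owner c S p"
    show "\<forall>i\<in>I. alloc_value J a p S = w J I K a owner (I - {i}) c (bids_at_prices J a bb p)"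
    proof
      fix i assume i: "i \<in> I"
      obtain T where T: "feasible J I K a owner c T" "\<forall>k\<in>T. owner k \<noteq> i"
        "\<forall>k\<in>T. price_of J p (a k) \<le> bb k" "alloc_value J a p T = alloc_value J a p S"
        using pm i unfolding price_match_def by blast
      have TK: "T \<subseteq> K" using T(1) unfolding feasible_def by blast
      have TF: "T \<in> F i" unfolding F_def using T(1,2) TK assms(5) by auto
      have "(\<Sum>k\<in>T. bp k) = (\<Sum>k\<in>T. price_of J p (a k))"
        unfolding bp_def bids_at_prices_def using T(3) by (intro sum.cong) auto
      also have "\<dots> = alloc_value J a p S"
        using sum_price_of[OF fJ Fsub(2)[OF TF]] T(4) by simp
      finally have "alloc_value J a p S \<le> w J I K a owner (I - {i}) c bp"
        unfolding wdef using Ffin TF by (metis Max_ge image_eqI)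
      then show "alloc_value J a p S = w J I K a owner (I - {i}) c (bids_at_prices J a bb p)"
        using wle[of i] unfolding bp_def by simp
    qed
  next
    assume H: "\<forall>i\<in>I. alloc_value J a p S = w J I K a owner (I - {i}) c (bids_at_prices J a bb p)"
    have "\<exists>T. feasible J I K a owner c T \<and> (\<forall>k\<in>T. owner k \<noteq> i)
        \<and> (\<forall>k\<in>T. price_of J p (a k) \<le> bb k)
        \<and> alloc_value J a p T = alloc_value J a p S" if i: "i \<in> I" for i
    proof -
      have "Max ((\<lambda>T. \<Sum>k\<in>T. bp k) ` F i) \<in> (\<lambda>T. \<Sum>k\<in>T. bp k) ` F i"
        using Ffin Fne by (intro Max_in) auto
      then obtain T where TF: "T \<in> F i" and Tv: "(\<Sum>k\<in>T. bp k) = alloc_value J a p S"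
        using H i wdef[of i] unfolding bp_def by auto
      define T' where "T' = {k\<in>T. price_of J p (a k) \<le> bb k}"
      have fT: "finite T" using Fsub(2)[OF TF] .
      have sub: "T' \<subseteq> T" unfolding T'_def by auto
      have "(\<Sum>k\<in>T. bp k) = (\<Sum>k\<in>T'. bp k)"
        unfolding T'_def bp_def bids_at_prices_def using fT
        by (subst sum.inter_filter[symmetric]) (auto intro: sum.cong)
      also have "\<dots> = (\<Sum>k\<in>T'. price_of J p (a k))"
        unfolding T'_def bp_def bids_at_prices_def by (intro sum.cong) auto
      also have "\<dots> = alloc_value J a p T'"
        using sum_price_of[OF fJ finite_subset[OF sub fT]] .
      finally have v: "alloc_value J a p T' = alloc_value J a p S" using Tv by simp
      have Tf: "feasible J I K a owner c T" "\<forall>k\<in>T. owner k \<in> I - {i}"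
        using TF unfolding F_def by auto
      have "feasible J I K a owner c T'"
        unfolding feasible_def
      proof (intro conjI ballI)
        show "T' \<subseteq> K" using Tf(1) sub unfolding feasible_def by blast
      next
        fix j assume j: "j \<in> J"
        have "(\<Sum>k\<in>T'. a k j) \<le> (\<Sum>k\<in>T. a k j)" by (rule sum_mono2[OF fT sub]) simp
        then show "(\<Sum>k\<in>T'. a k j) \<le> c j" using Tf(1) j unfolding feasible_def by force
      next
        fix i' assume i': "i' \<in> I"
        have "card {k\<in>T'. owner k = i'} \<le> card {k\<in>T. owner k = i'}"
          using fT sub by (intro card_mono) auto
        then show "card {k\<in>T'. owner k = i'} \<le> 1" using Tf(1) i' unfolding feasible_def by force
      qed
      moreover have "\<forall>k\<in>T'. owner k \<noteq> i" using Tf(2) sub by auto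
      moreover have "\<forall>k\<in>T'. price_of J p (a k) \<le> bb k" unfolding T'_def by auto
      ultimately show ?thesis using v by blast
    qed
    then show "price_match J I K a bb owner c S p"
      unfolding price_match_def using assms(9) by blast
  qed
qed

end
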